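(* Let $k\ge3$ and let $\mathcal B_k$ denote $\mathcal E_1$ if $k=3$ and $\mathcal E_{k-2}$ if $k\ge4$ (so $\mathcal B_k$ carries exactly the nonlocal coordinates $\psi^{(3)},\dots,\psi^{(k-1)}$). Then the horizontal $1$-form $\omega^{(k)}=X^{(k)}\,dx+Y^{(k)}\,dy$ is a nontrivial conservation law of $\mathcal B_k$: it satisfies $\mathcal D_y(X^{(k)})=\mathcal D_x(Y^{(k)})$, where $\mathcal D_x,\mathcal D_y$ are the total derivatives of $\mathcal B_k$, and there is no smooth function $g$ on $\mathcal B_k$ with $X^{(k)}=\mathcal D_x(g)$ and $Y^{(k)}=\mathcal D_y(g)$.
   Context: Let $\mathcal E_1$ be the system $u_y+vu_x=\frac1{v-u}$, $v_y+uv_x=\frac1{u-v}$ with internal coordinates $x,y,u_i=\partial^iu/\partial x^i$, $v_i=\partial^iv/\partial x^i$ ($i\ge0$) and total derivatives $D_x=\partial_x+\sum_i(u_{i+1}\partial_{u_i}+v_{i+1}\partial_{v_i})$, $D_y=\partial_y+\sum_i\big(D_x^i(\tfrac1{v-u}-vu_1)\partial_{u_i}+D_x^i(\tfrac1{u-v}-uv_1)\partial_{v_i}\big)$. Let $\sigma_m=\sum_{i+j=m}u^iv^j$, $\psi^{(1)}=y$, $\psi^{(2)}=x$, and let $\psi^{(k)}$, $k\ge3$, be new coordinates; for $k\ge2$ put $X^{(k)}=\sigma_{k-2}-\sum_{i=1}^{k-3}i\,\sigma_{k-i-3}\psi^{(i)}$ and for $k\ge3$ put $Y^{(k)}=-uv\,X^{(k-1)}-(k-2)\psi^{(k-2)}$.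 For $m\ge2$, $\mathcal E_m=\mathcal E_1\times\mathbb R^{m-1}$ has the additional coordinates $\psi^{(3)},\dots,\psi^{(m+1)}$ and the total derivatives $D^{(m)}_x=D_x+\sum_{i=3}^{m+1}X^{(i)}\partial/\partial\psi^{(i)}$, $D^{(m)}_y=D_y+\sum_{i=3}^{m+1}Y^{(i)}\partial/\partial\psi^{(i)}$. *)

theory Defs
  imports "HOL-Analysis.Analysis"
begin

text \<open>Coordinates psi^(j) not belonging to the covering under consideration are simply
  ignored: functions on the covering are required not to depend on them.\<close>

datatype coord = Cx | Cy | Cu nat | Cv nat | Cpsi nat

type_synonym pt = "coord \<Rightarrow> real"

text \<open>Domain of the equation (the right-hand sides 1/(v-u) require u /= v).\<close>
definition Dom :: "pt set" where
  "Dom = {p. p (Cu 0) \<noteq> p (Cv 0)}"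

definition pd :: "coord \<Rightarrow> (pt \<Rightarrow> real) \<Rightarrow> pt \<Rightarrow> real" where
  "pd c g p = deriv (\<lambda>t. g (p(c := t))) (p c)"

fun iter_pd :: "coord list \<Rightarrow> (pt \<Rightarrow> real) \<Rightarrow> pt \<Rightarrow> real" where
  "iter_pd [] g = g"
| "iter_pd (c # cs) g = pd c (iter_pd cs g)"

definition coordsE :: "nat \<Rightarrow> coord set" where
  "coordsE m = {Cx, Cy} \<union> range Cu \<union> range Cv \<union> Cpsi ` {3..m+1}"

text \<open>Smooth functions on E_m: functions of finitely many of its coordinates, all of whose
  iterated partial derivatives (of every order) exist and are continuous on the domain
  (i.e. C-infinity functions of those finitely many variables).\<close>
definition smoothE :: "nat \<Rightarrow> (pt \<Rightarrow> real) \<Rightarrow> bool" where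
  "smoothE m g \<longleftrightarrow>
     (\<exists>S. finite S \<and> S \<subseteq> coordsE m \<and>
          (\<forall>p q. (\<forall>c\<in>S. p c = q c) \<longrightarrow> g p = g q)) \<and>
     (\<forall>cs. continuous_on Dom (iter_pd cs g) \<and>
           (\<forall>c. \<forall>p\<in>Dom. (\<lambda>t. iter_pd cs g (p(c := t))) differentiable (at (p c))))"

text \<open>Total derivatives of E_1 (the series have only finitely many nonzero terms
  on functions depending on finitely many coordinates).\<close>
definition Dx1 :: "(pt \<Rightarrow> real) \<Rightarrow> pt \<Rightarrow> real" where
  "Dx1 g p = pd Cx g p +
     (\<Sum>i. p (Cu (Suc i)) * pd (Cu i) g p + p (Cv (Suc i)) * pd (Cv i) g p)"

definition rhsU :: "pt \<Rightarrow> real" where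
  "rhsU p = 1 / (p (Cv 0) - p (Cu 0)) - p (Cv 0) * p (Cu 1)"

definition rhsV :: "pt \<Rightarrow> real" where
  "rhsV p = 1 / (p (Cu 0) - p (Cv 0)) - p (Cu 0) * p (Cv 1)"

definition Dy1 :: "(pt \<Rightarrow> real) \<Rightarrow> pt \<Rightarrow> real" where
  "Dy1 g p = pd Cy g p +
     (\<Sum>i. (Dx1 ^^ i) rhsU p * pd (Cu i) g p + (Dx1 ^^ i) rhsV p * pd (Cv i) g p)"

definition sigma :: "nat \<Rightarrow> pt \<Rightarrow> real" where
  "sigma m p = (\<Sum>i\<in>{0..m}. p (Cu 0) ^ i * p (Cv 0) ^ (m - i))"

definition psi :: "nat \<Rightarrow> pt \<Rightarrow> real" where
  "psi i p = (if i = 1 then p Cy else if i = 2 then p Cx else p (Cpsi i))"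

text \<open>X^(k) for k >= 2, Y^(k) for k >= 3.\<close>
definition Xk :: "nat \<Rightarrow> pt \<Rightarrow> real" where
  "Xk k p = sigma (k - 2) p - (\<Sum>i\<in>{1..k-3}. real i * sigma (k - i - 3) p * psi i p)"

definition Yk :: "nat \<Rightarrow> pt \<Rightarrow> real" where
  "Yk k p = - p (Cu 0) * p (Cv 0) * Xk (k - 1) p - real (k - 2) * psi (k - 2) p"

definition DxE :: "nat \<Rightarrow> (pt \<Rightarrow> real) \<Rightarrow> pt \<Rightarrow> real" where
  "DxE m g p = Dx1 g p + (\<Sum>i\<in>{3..m+1}. Xk i p * pd (Cpsi i) g p)"

definition DyE :: "nat \<Rightarrow> (pt \<Rightarrow> real) \<Rightarrow> pt \<Rightarrow> real" where
  "DyE m g p = Dy1 g p + (\<Sum>i\<in>{3..m+1}. Yk i p * pd (Cpsi i) g p)"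

definition Bidx :: "nat \<Rightarrow> nat" where
  "Bidx k = (if k = 3 then 1 else k - 2)"

end

theory Submission
  imports Defs "HOL-Computational_Algebra.Polynomial"
begin

definition ee :: "coord \<Rightarrow> coord \<Rightarrow> real" where
  "ee c d = (if c = d then 1 else 0)"

definition pc :: "nat \<Rightarrow> coord" where
  "pc i = (if i = 1 then Cy else if i = 2 then Cx else Cpsi i)"

lemma psi_pc: "psi i p = p (pc i)"
  by (simp add: psi_def pc_def)

lemma pc_inj[simp]: "pc i = pc j \<longleftrightarrow> i = j"
  by (auto simp: pc_def)

lemma pc_ne[simp]: "pc i \<noteq> Cu j" "pc i \<noteq> Cv j" "Cu j \<noteq> pc i" "Cv j \<noteq> pc i"
  by (auto simp: pc_def)

lemma pc_simps[simp]: "pc 1 = Cy" "pc 2 = Cx" "pc (Suc 0) = Cy" "pc (Suc (Suc 0)) = Cx" "3 \<le> i \<Longrightarrow> pc i = Cpsi i"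
  by (auto simp: pc_def)

fun XR :: "nat \<Rightarrow> pt \<Rightarrow> real" where
  "XR 0 p = 0"
| "XR (Suc 0) p = 0"
| "XR (Suc (Suc 0)) p = 1"
| "XR (Suc (Suc (Suc j))) p = (p (Cu 0) + p (Cv 0)) * XR (Suc (Suc j)) p
     - p (Cu 0) * p (Cv 0) * XR (Suc j) p - real j * p (pc j)"

fun dXR :: "coord \<Rightarrow> nat \<Rightarrow> pt \<Rightarrow> real" where
  "dXR c 0 p = 0"
| "dXR c (Suc 0) p = 0"
| "dXR c (Suc (Suc 0)) p = 0"
| "dXR c (Suc (Suc (Suc j))) p = (ee c (Cu 0) + ee c (Cv 0)) * XR (Suc (Suc j)) p
     + (p (Cu 0) + p (Cv 0)) * dXR c (Suc (Suc j)) p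
     - (ee c (Cu 0) * p (Cv 0) + p (Cu 0) * ee c (Cv 0)) * XR (Suc j) p
     - p (Cu 0) * p (Cv 0) * dXR c (Suc j) p - real j * ee c (pc j)"

lemma deriv_coord: "((\<lambda>t. (p(c:=t)) d) has_real_derivative ee c d) (at x)"
  by (cases "c = d") (auto simp: ee_def)

lemma deriv_XR: "((\<lambda>t. XR j (p(c:=t))) has_real_derivative dXR c j p) (at (p c))"
proof (induction j p rule: XR.induct)
  case (4 j p)
  have cu: "((\<lambda>t. (p(c:=t)) (Cu 0)) has_real_derivative ee c (Cu 0)) (at (p c))"
    and cv: "((\<lambda>t. (p(c:=t)) (Cv 0)) has_real_derivative ee c (Cv 0)) (at (p c))"
    and cp: "((\<lambda>t. (p(c:=t)) (pc j)) has_real_derivative ee c (pc j)) (at (p c))"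
    by (rule deriv_coord)+
  have "((\<lambda>t. ((p(c:=t)) (Cu 0) + (p(c:=t)) (Cv 0)) * XR (Suc (Suc j)) (p(c:=t))
     - (p(c:=t)) (Cu 0) * (p(c:=t)) (Cv 0) * XR (Suc j) (p(c:=t)) - real j * (p(c:=t)) (pc j))
     has_real_derivative
     ((ee c (Cu 0) + ee c (Cv 0)) * XR (Suc (Suc j)) p + (p (Cu 0) + p (Cv 0)) * dXR c (Suc (Suc j)) p
     - ((ee c (Cu 0) * p (Cv 0) + p (Cu 0) * ee c (Cv 0)) * XR (Suc j) p + p (Cu 0) * p (Cv 0) * dXR c (Suc j) p)
     - real j * ee c (pc j))) (at (p c))"
    apply (rule DERIV_diff)
     apply (rule DERIV_diff)
      apply (rule DERIV_cong[OF DERIV_mult[OF DERIV_add[OF cu cv] 4(1)]])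
      apply (simp add: algebra_simps)
     apply (rule DERIV_cong[OF DERIV_mult[OF DERIV_mult[OF cu cv] 4(2)]])
     apply (simp add: algebra_simps)
    apply (rule DERIV_cmult[OF cp])
    done
  then show ?case unfolding XR.simps dXR.simps
    by (rule DERIV_cong) (simp add: algebra_simps)
qed auto

lemma pd_XR: "pd c (XR j) p = dXR c j p"
  unfolding pd_def by (rule DERIV_imp_deriv[OF deriv_XR])

lemma sigma_0[simp]: "sigma 0 p = 1" by (simp add: sigma_def)
lemma sigma_Suc: "sigma (Suc n) p = p (Cu 0) * sigma n p + p (Cv 0) ^ Suc n"
proof -
  have "sigma (Suc n) p = (\<Sum>i\<in>{0..Suc n}. p (Cu 0) ^ i * p (Cv 0) ^ (Suc n - i))"
    by (simp add: sigma_def)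
  also have "\<dots> = (\<Sum>i\<in>{0..n}. p (Cu 0) ^ Suc i * p (Cv 0) ^ (Suc n - Suc i)) + p (Cv 0) ^ Suc n"
    by (subst sum.atLeast0_atMost_Suc_shift) simp
  also have "\<dots> = p (Cu 0) * sigma n p + p (Cv 0) ^ Suc n"
    by (simp add: sigma_def sum_distrib_left mult.assoc)
  finally show ?thesis .
qed

lemma sigma_SS: "sigma (Suc (Suc n)) p = (p (Cu 0) + p (Cv 0)) * sigma (Suc n) p - p (Cu 0) * p (Cv 0) * sigma n p"
  using sigma_Suc[of "Suc n" p] sigma_Suc[of n p] by (simp add: algebra_simps)

definition TT :: "nat \<Rightarrow> pt \<Rightarrow> real" where
  "TT n p = (\<Sum>i\<in>{1..n}. real i * sigma (n - i) p * psi i p)"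

lemma Xk_TT: "Xk (Suc (Suc (Suc n))) p = sigma (Suc n) p - TT n p"
  by (simp add: Xk_def TT_def)

lemma Xk_2: "Xk (Suc (Suc 0)) p = 1" by (simp add: Xk_def)

lemma sigma_1: "sigma (Suc 0) p = p (Cu 0) + p (Cv 0)"
  using sigma_Suc[of 0 p] by simp

lemma TT_0: "TT 0 p = 0" by (simp add: TT_def)
lemma TT_1: "TT (Suc 0) p = p (pc (Suc 0))" by (simp add: TT_def psi_pc)

lemma TT_SS: "TT (Suc (Suc J)) p = (p (Cu 0) + p (Cv 0)) * TT (Suc J) p - p (Cu 0) * p (Cv 0) * TT J p
   + real (Suc (Suc J)) * psi (Suc (Suc J)) p"
proof -
  let ?s = "p (Cu 0) + p (Cv 0)" and ?q = "p (Cu 0) * p (Cv 0)"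
  have A: "TT (Suc (Suc J)) p = (\<Sum>i\<in>{1..J}. real i * sigma (Suc (Suc J) - i) p * psi i p)
      + real (Suc J) * sigma 1 p * psi (Suc J) p + real (Suc (Suc J)) * psi (Suc (Suc J)) p"
    by (simp add: TT_def)
  have B: "TT (Suc J) p = (\<Sum>i\<in>{1..J}. real i * sigma (Suc J - i) p * psi i p)
      + real (Suc J) * psi (Suc J) p"
    by (simp add: TT_def)
  have C: "(\<Sum>i\<in>{1..J}. real i * sigma (Suc (Suc J) - i) p * psi i p)
     = ?s * (\<Sum>i\<in>{1..J}. real i * sigma (Suc J - i) p * psi i p) - ?q * TT J p"
  proof -
    have "(\<Sum>i\<in>{1..J}. real i * sigma (Suc (Suc J) - i) p * psi i p)
        = (\<Sum>i\<in>{1..J}. ?s * (real i * sigma (Suc J - i) p * psi i p) - ?q * (real i * sigma (J - i) p * psi i p))"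
    proof (rule sum.cong)
      fix i assume "i \<in> {1..J}"
      then have "Suc (Suc J) - i = Suc (Suc (J - i))" "Suc J - i = Suc (J - i)" by auto
      then show "real i * sigma (Suc (Suc J) - i) p * psi i p =
        ?s * (real i * sigma (Suc J - i) p * psi i p) - ?q * (real i * sigma (J - i) p * psi i p)"
        by (simp add: sigma_SS algebra_simps)
    qed simp
    also have "\<dots> = ?s * (\<Sum>i\<in>{1..J}. real i * sigma (Suc J - i) p * psi i p) - ?q * TT J p"
      by (simp add: TT_def sum_subtractf sum_distrib_left)
    finally show ?thesis .
  qed
  show ?thesis using A B C by (simp add: sigma_1 algebra_simps)
qed

lemma Xk_XR_aux: "Xk (Suc (Suc j)) p = XR (Suc (Suc j)) p \<and> Xk (Suc (Suc (Suc j))) p = XR (Suc (Suc (Suc j))) p"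
proof (induction j)
  case 0
  then show ?case by (simp add: Xk_2 Xk_TT TT_0 sigma_1 numeral_2_eq_2)
next
  case (Suc j)
  then have IH1: "Xk (Suc (Suc j)) p = XR (Suc (Suc j)) p" and IH2: "Xk (Suc (Suc (Suc j))) p = XR (Suc (Suc (Suc j))) p"
    by auto
  show ?case
  proof (cases j)
    case 0
    then show ?thesis using IH2 IH1
      by (simp add: Xk_TT TT_1 TT_0 sigma_SS sigma_1 Xk_2 psi_pc numeral_2_eq_2)
  next
    case (Suc J)
    have "Xk (Suc (Suc (Suc (Suc (Suc J))))) p = sigma (Suc (Suc (Suc J))) p - TT (Suc (Suc J)) p"
      by (rule Xk_TT)
    also have "\<dots> = (p (Cu 0) + p (Cv 0)) * Xk (Suc (Suc (Suc (Suc J)))) p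
       - p (Cu 0) * p (Cv 0) * Xk (Suc (Suc (Suc J))) p - real (Suc (Suc J)) * psi (Suc (Suc J)) p"
      unfolding Xk_TT TT_SS sigma_SS[of "Suc J"] by (simp add: algebra_simps)
    finally show ?thesis using IH1 IH2 Suc by (simp add: psi_pc)
  qed
qed

lemma Xk_XR: "2 \<le> j \<Longrightarrow> Xk j p = XR j p"
  using Xk_XR_aux[of "j - 2" p] by (cases j; cases "j - 1"; simp)

lemma Xk_XR_fun: "2 \<le> j \<Longrightarrow> Xk j = XR j"
  using Xk_XR by auto

lemma alg_main:
  fixes s q a b c d :: real and X LX LY YH ps :: "nat \<Rightarrow> real"
  assumes X1: "X 1 = 0" and X2: "X 2 = 1"
    and Xrec: "\<And>J. X (J+3) = s * X (J+2) - q * X (J+1) - real J * ps J"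
    and LXrec: "\<And>J. J + 3 \<le> K \<Longrightarrow> LX (J+3) = a * X (J+2) + s * LX (J+2) - b * X (J+1) - q * LX (J+1) - real J * X J"
    and LYrec: "\<And>J. J + 3 \<le> K \<Longrightarrow> LY (J+3) = c * X (J+2) + s * LY (J+2) - d * X (J+1) - q * LY (J+1) - real J * YH J"
    and LX1: "LX 1 = 0" and LX2: "LX 2 = 0" and LY1: "LY 1 = 0" and LY2: "LY 2 = 0"
    and YH1: "YH 1 = 1" and YHrec: "\<And>n. YH (n+2) = - q * X (n+1) - real n * ps n"
    and cb: "c = - b" and dd: "d = q * a - s * b + 1"
  shows "(n + 3 \<le> K \<longrightarrow> LY (n+3) = - b * X (n+2) - q * LX (n+2) - real (n+1) * X (n+1)) \<and>
         (n + 4 \<le> K \<longrightarrow> LY (n+4) = - b * X (n+3) - q * LX (n+3) - real (n+2) * X (n+2))"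
proof (induction n)
  case 0
  have x3: "X 3 = s" using Xrec[of 0] X1 X2 by (simp add: eval_nat_numeral)
  have lx3: "3 \<le> K \<Longrightarrow> LX 3 = a" using LXrec[of 0] X1 X2 LX1 LX2 by (simp add: eval_nat_numeral)
  have ly3: "3 \<le> K \<Longrightarrow> LY 3 = c" using LYrec[of 0] X1 X2 LY1 LY2 by (simp add: eval_nat_numeral)
  have ly4: "4 \<le> K \<Longrightarrow> LY 4 = c * s + s * c - d - 1" using LYrec[of 1] x3 X2 ly3 LY2 YH1 by (simp add: eval_nat_numeral)
  show ?case using x3 lx3 ly3 ly4 X1 X2 LX2 cb dd by (auto simp: algebra_simps eval_nat_numeral)
next
  case (Suc n)
  have A: "n + 4 \<le> K \<longrightarrow> LY (n+4) = - b * X (n+3) - q * LX (n+3) - real (n+2) * X (n+2)"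
    using Suc by (simp add: eval_nat_numeral)
  have B: "LY (n+5) = - b * X (n+4) - q * LX (n+4) - real (n+3) * X (n+3)" if K: "n + 5 \<le> K"
  proof -
    have ly3: "LY (n+3) = - b * X (n+2) - q * LX (n+2) - real (n+1) * X (n+1)" using Suc K by (simp add: eval_nat_numeral)
    have ly4: "LY (n+4) = - b * X (n+3) - q * LX (n+3) - real (n+2) * X (n+2)" using Suc K by (simp add: eval_nat_numeral)
    have ly5: "LY (n+5) = c * X (n+4) + s * LY (n+4) - d * X (n+3) - q * LY (n+3) - real (n+2) * YH (n+2)"
      using LYrec[of "n+2"] K by (simp add: add.assoc eval_nat_numeral)
    have lx4: "LX (n+4) = a * X (n+3) + s * LX (n+3) - b * X (n+2) - q * LX (n+2) - real (n+1) * X (n+1)"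
      using LXrec[of "n+1"] K by (simp add: add.assoc eval_nat_numeral)
    have x4: "X (n+4) = s * X (n+3) - q * X (n+2) - real (n+1) * ps (n+1)"
      using Xrec[of "n+1"] by (simp add: add.assoc eval_nat_numeral)
    have x3: "X (n+3) = s * X (n+2) - q * X (n+1) - real n * ps n"
      using Xrec[of n] by (simp add: eval_nat_numeral)
    have yh: "YH (n+2) = - q * X (n+1) - real n * ps n" by (rule YHrec)
    show ?thesis unfolding ly5 ly3 ly4 lx4 x4 yh cb dd x3
      by (simp add: algebra_simps)
  qed
  show ?case using A B by (simp add: add.assoc eval_nat_numeral)
qed

lemma dXR_zero: "c \<noteq> Cu 0 \<Longrightarrow> c \<noteq> Cv 0 \<Longrightarrow> (\<forall>j. c \<noteq> pc j) \<Longrightarrow> dXR c n p = 0"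
  by (induction c n p rule: dXR.induct) (auto simp: ee_def)

lemma Bidx_eq: "3 \<le> k \<Longrightarrow> Bidx k + 1 = k - 1"
  by (auto simp: Bidx_def)

lemma sum_split12: "2 \<le> (M::nat) \<Longrightarrow> sum f {1..M} = f 1 + f 2 + sum f {3..M}"
proof -
  assume "2 \<le> M"
  then have "{1..M} = insert 1 (insert 2 {3..M})" by auto
  then show ?thesis by (simp add: add.assoc)
qed

definition YH :: "nat \<Rightarrow> pt \<Rightarrow> real" where
  "YH i p = (if i = 1 then 1 else if i = 2 then 0 else Yk i p)"

lemma suminf_0:
  assumes "\<And>i. f (Suc i) = (0::real)"
  shows "suminf f = f 0"
proof -
  have "suminf f = sum f {0}"
  proof (rule suminf_finite)
    fix n assume "n \<notin> {0::nat}"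
    then obtain m where "n = Suc m" by (cases n) auto
    then show "f n = 0" using assms by simp
  qed simp
  then show ?thesis by simp
qed

lemma DxE_gen:
  assumes k: "3 \<le> k" and hu: "\<And>i. pd (Cu (Suc i)) F p = 0" and hv: "\<And>i. pd (Cv (Suc i)) F p = 0"
  shows "DxE (Bidx k) F p = p (Cu 1) * pd (Cu 0) F p + p (Cv 1) * pd (Cv 0) F p
      + (\<Sum>i\<in>{1..k-1}. XR i p * pd (pc i) F p)"
proof -
  have S: "(\<Sum>i. p (Cu (Suc i)) * pd (Cu i) F p + p (Cv (Suc i)) * pd (Cv i) F p)
     = p (Cu 1) * pd (Cu 0) F p + p (Cv 1) * pd (Cv 0) F p"
    by (subst suminf_0) (simp_all add: hu hv)
  have T: "(\<Sum>i\<in>{3..Bidx k + 1}. Xk i p * pd (Cpsi i) F p) = (\<Sum>i\<in>{3..k-1}. XR i p * pd (pc i) F p)"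
    unfolding Bidx_eq[OF k] by (rule sum.cong) (auto simp: Xk_XR)
  have U: "(\<Sum>i\<in>{1..k-1}. XR i p * pd (pc i) F p) = pd Cx F p + (\<Sum>i\<in>{3..k-1}. XR i p * pd (pc i) F p)"
    using k by (subst sum_split12) (auto simp: numeral_2_eq_2)
  show ?thesis unfolding DxE_def Dx1_def S T U by simp
qed

lemma DyE_gen:
  assumes k: "3 \<le> k" and hu: "\<And>i. pd (Cu (Suc i)) F p = 0" and hv: "\<And>i. pd (Cv (Suc i)) F p = 0"
  shows "DyE (Bidx k) F p = rhsU p * pd (Cu 0) F p + rhsV p * pd (Cv 0) F p
      + (\<Sum>i\<in>{1..k-1}. YH i p * pd (pc i) F p)"
proof -
  have S: "(\<Sum>i. (Dx1 ^^ i) rhsU p * pd (Cu i) F p + (Dx1 ^^ i) rhsV p * pd (Cv i) F p)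
     = rhsU p * pd (Cu 0) F p + rhsV p * pd (Cv 0) F p"
    by (subst suminf_0) (simp_all add: hu hv)
  have T: "(\<Sum>i\<in>{3..Bidx k + 1}. Yk i p * pd (Cpsi i) F p) = (\<Sum>i\<in>{3..k-1}. YH i p * pd (pc i) F p)"
    unfolding Bidx_eq[OF k] by (rule sum.cong) (auto simp: YH_def)
  have U: "(\<Sum>i\<in>{1..k-1}. YH i p * pd (pc i) F p) = pd Cy F p + (\<Sum>i\<in>{3..k-1}. YH i p * pd (pc i) F p)"
    using k by (subst sum_split12) (auto simp: numeral_2_eq_2 YH_def)
  show ?thesis unfolding DyE_def Dy1_def S T U by simp
qed

lemma sum_ee: "(J::nat) \<le> N \<Longrightarrow> real J * (\<Sum>i\<in>{1..N}. w i * ee (pc i) (pc J)) = real J * w J"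
proof (cases "J = 0")
  case False
  assume "J \<le> N"
  then have "(\<Sum>i\<in>{1..N}. w i * ee (pc i) (pc J)) = (\<Sum>i\<in>{1..N}. if i = J then w i else 0)"
    by (intro sum.cong) (auto simp: ee_def)
  also have "\<dots> = w J" using False \<open>J \<le> N\<close> by (simp add: sum.delta)
  finally show ?thesis by simp
qed simp

definition LL :: "real \<Rightarrow> real \<Rightarrow> (nat \<Rightarrow> real) \<Rightarrow> nat \<Rightarrow> nat \<Rightarrow> pt \<Rightarrow> real" where
  "LL wu wv w N j p = wu * dXR (Cu 0) j p + wv * dXR (Cv 0) j p + (\<Sum>i\<in>{1..N}. w i * dXR (pc i) j p)"

lemma LL_rec:
  assumes "J \<le> N"
  shows "LL wu wv w N (J+3) p = (wu + wv) * XR (J+2) p + (p (Cu 0) + p (Cv 0)) * LL wu wv w N (J+2) p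
     - (wu * p (Cv 0) + p (Cu 0) * wv) * XR (J+1) p - p (Cu 0) * p (Cv 0) * LL wu wv w N (J+1) p - real J * w J"
proof -
  let ?s = "p (Cu 0) + p (Cv 0)" and ?q = "p (Cu 0) * p (Cv 0)"
  have e3: "J + 3 = Suc (Suc (Suc J))" "J + 2 = Suc (Suc J)" "J + 1 = Suc J" by auto
  have "(\<Sum>i\<in>{1..N}. w i * dXR (pc i) (Suc (Suc (Suc J))) p)
     = (\<Sum>i\<in>{1..N}. ?s * (w i * dXR (pc i) (Suc (Suc J)) p) - ?q * (w i * dXR (pc i) (Suc J) p)
          - real J * (w i * ee (pc i) (pc J)))"
    by (intro sum.cong) (auto simp: ee_def algebra_simps)
  also have "\<dots> = ?s * (\<Sum>i\<in>{1..N}. w i * dXR (pc i) (Suc (Suc J)) p) - ?q * (\<Sum>i\<in>{1..N}. w i * dXR (pc i) (Suc J) p)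
        - real J * (\<Sum>i\<in>{1..N}. w i * ee (pc i) (pc J))"
    by (simp add: sum_subtractf sum_distrib_left)
  also have "\<dots> = ?s * (\<Sum>i\<in>{1..N}. w i * dXR (pc i) (Suc (Suc J)) p) - ?q * (\<Sum>i\<in>{1..N}. w i * dXR (pc i) (Suc J) p)
        - real J * w J"
    using sum_ee[OF assms, of w] by simp
  finally have S: "(\<Sum>i\<in>{1..N}. w i * dXR (pc i) (Suc (Suc (Suc J))) p) = \<dots>" .
  show ?thesis unfolding LL_def e3 S
    by (simp add: ee_def algebra_simps)
qed

lemma LL_small: "LL wu wv w N 1 p = 0" "LL wu wv w N 2 p = 0"
  by (simp_all add: LL_def numeral_2_eq_2)

lemma Yk_fun: "3 \<le> k \<Longrightarrow> Yk k = (\<lambda>q. - (q (Cu 0) * q (Cv 0) * XR (k-1) q) - real (k-2) * q (pc (k-2)))"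
  by (rule ext) (simp add: Yk_def Xk_XR psi_pc)

lemma pd_Yk:
  assumes k: "3 \<le> k"
  shows "pd c (Yk k) p = - ((ee c (Cu 0) * p (Cv 0) + p (Cu 0) * ee c (Cv 0)) * XR (k-1) p
     + p (Cu 0) * p (Cv 0) * dXR c (k-1) p) - real (k-2) * ee c (pc (k-2))"
proof -
  have cu: "((\<lambda>t. (p(c:=t)) (Cu 0)) has_real_derivative ee c (Cu 0)) (at (p c))"
    and cv: "((\<lambda>t. (p(c:=t)) (Cv 0)) has_real_derivative ee c (Cv 0)) (at (p c))"
    and cp: "((\<lambda>t. (p(c:=t)) (pc (k-2))) has_real_derivative ee c (pc (k-2))) (at (p c))"
    by (rule deriv_coord)+
  have "((\<lambda>t. - ((p(c:=t)) (Cu 0) * (p(c:=t)) (Cv 0) * XR (k-1) (p(c:=t))) - real (k-2) * (p(c:=t)) (pc (k-2)))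
     has_real_derivative (- ((ee c (Cu 0) * p (Cv 0) + p (Cu 0) * ee c (Cv 0)) * XR (k-1) p
     + p (Cu 0) * p (Cv 0) * dXR c (k-1) p) - real (k-2) * ee c (pc (k-2)))) (at (p c))"
    apply (rule DERIV_diff)
     apply (rule DERIV_minus)
     apply (rule DERIV_cong[OF DERIV_mult[OF DERIV_mult[OF cu cv] deriv_XR[of "k-1" p c]]])
     apply (simp add: algebra_simps)
    apply (rule DERIV_cmult[OF cp])
    done
  then show ?thesis unfolding pd_def Yk_fun[OF k] by (simp add: DERIV_imp_deriv)
qed

lemma part1:
  assumes k: "3 \<le> k" and pD: "p \<in> Dom"
  shows "DyE (Bidx k) (Xk k) p = DxE (Bidx k) (Yk k) p"
proof -
  let ?u = "p (Cu 0)" and ?v = "p (Cv 0)" and ?u1 = "p (Cu 1)" and ?v1 = "p (Cv 1)"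
  let ?s = "?u + ?v" and ?q = "?u * ?v"
  have uv: "?u \<noteq> ?v" using pD by (simp add: Dom_def)
  have XX: "Xk k = XR k" using k by (simp add: Xk_XR_fun)
  have LHS: "DyE (Bidx k) (Xk k) p = LL (rhsU p) (rhsV p) (\<lambda>i. YH i p) (k-1) k p"
    unfolding XX by (subst DyE_gen[OF k]) (auto simp: pd_XR dXR_zero LL_def)
  have "DxE (Bidx k) (Yk k) p = ?u1 * pd (Cu 0) (Yk k) p + ?v1 * pd (Cv 0) (Yk k) p
      + (\<Sum>i\<in>{1..k-1}. XR i p * pd (pc i) (Yk k) p)"
    by (rule DxE_gen[OF k]) (simp_all add: pd_Yk[OF k] ee_def dXR_zero)
  also have "(\<Sum>i\<in>{1..k-1}. XR i p * pd (pc i) (Yk k) p)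
     = (\<Sum>i\<in>{1..k-1}. - ?q * (XR i p * dXR (pc i) (k-1) p) - real (k-2) * (XR i p * ee (pc i) (pc (k-2))))"
    by (intro sum.cong) (auto simp: pd_Yk[OF k] ee_def algebra_simps)
  also have "\<dots> = - ?q * (\<Sum>i\<in>{1..k-1}. XR i p * dXR (pc i) (k-1) p) - real (k-2) * (\<Sum>i\<in>{1..k-1}. XR i p * ee (pc i) (pc (k-2)))"
    by (simp add: sum_subtractf sum_distrib_left)
  also have "real (k-2) * (\<Sum>i\<in>{1..k-1}. XR i p * ee (pc i) (pc (k-2))) = real (k-2) * XR (k-2) p"
    by (rule sum_ee) simp
  finally have RHS: "DxE (Bidx k) (Yk k) p = - (?u1 * ?v + ?u * ?v1) * XR (k-1) p
       - ?q * LL ?u1 ?v1 (\<lambda>i. XR i p) (k-1) (k-1) p - real (k-2) * XR (k-2) p"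
    by (simp add: pd_Yk[OF k] ee_def LL_def algebra_simps)
  have cb: "rhsU p + rhsV p = - (?u1 * ?v + ?u * ?v1)"
  proof -
    have "1 / (?u - ?v) = - (1 / (?v - ?u))"
      by (metis minus_diff_eq divide_minus_right)
    then show ?thesis by (simp add: rhsU_def rhsV_def algebra_simps)
  qed
  have dd: "rhsU p * ?v + ?u * rhsV p = ?q * (?u1 + ?v1) - ?s * (?u1 * ?v + ?u * ?v1) + 1"
  proof -
    have a: "?v - ?u \<noteq> 0" "?u - ?v \<noteq> 0" using uv by auto
    have "?u / (?u - ?v) = - (?u / (?v - ?u))"
      by (metis minus_diff_eq divide_minus_right)
    moreover have "?v / (?v - ?u) - ?u / (?v - ?u) = (?v - ?u) / (?v - ?u)"
      by (rule diff_divide_distrib[symmetric])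
    moreover have "(?v - ?u) / (?v - ?u) = 1" using a by simp
    ultimately have "?v / (?v - ?u) + ?u / (?u - ?v) = 1"
      by linarith
    then show ?thesis by (simp add: rhsU_def rhsV_def algebra_simps)
  qed
  have YHrec: "YH (n+2) p = - ?q * XR (n+1) p - real n * p (pc n)" for n
  proof (cases n)
    case 0 then show ?thesis by (simp add: YH_def)
  next
    case (Suc m)
    then show ?thesis by (simp add: YH_def Yk_def Xk_XR psi_pc)
  qed
  have X1: "XR 1 p = 0" and X2: "XR 2 p = 1" by (simp_all add: numeral_2_eq_2)
  have Xr: "XR (J+3) p = ?s * XR (J+2) p - ?q * XR (J+1) p - real J * p (pc J)" for J
    by (simp add: eval_nat_numeral)
  have LXr: "LL ?u1 ?v1 (\<lambda>i. XR i p) (k-1) (J+3) p = (?u1 + ?v1) * XR (J+2) p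
      + ?s * LL ?u1 ?v1 (\<lambda>i. XR i p) (k-1) (J+2) p - (?u1 * ?v + ?u * ?v1) * XR (J+1) p
      - ?q * LL ?u1 ?v1 (\<lambda>i. XR i p) (k-1) (J+1) p - real J * XR J p" if "J + 3 \<le> k" for J
    using LL_rec[of J "k-1" ?u1 ?v1 "\<lambda>i. XR i p" p] that by simp
  have LYr: "LL (rhsU p) (rhsV p) (\<lambda>i. YH i p) (k-1) (J+3) p = (rhsU p + rhsV p) * XR (J+2) p
      + ?s * LL (rhsU p) (rhsV p) (\<lambda>i. YH i p) (k-1) (J+2) p - (rhsU p * ?v + ?u * rhsV p) * XR (J+1) p
      - ?q * LL (rhsU p) (rhsV p) (\<lambda>i. YH i p) (k-1) (J+1) p - real J * YH J p" if "J + 3 \<le> k" for J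
    using LL_rec[of J "k-1" "rhsU p" "rhsV p" "\<lambda>i. YH i p" p] that by simp
  have YH1: "YH 1 p = 1" by (simp add: YH_def)
  have YHr: "YH (n+2) p = - ?q * XR (n+1) p - real n * p (pc n)" for n
    using YHrec[of n] by simp
  note M = alg_main[where s = ?s and q = ?q and a = "?u1 + ?v1" and b = "?u1 * ?v + ?u * ?v1"
      and c = "rhsU p + rhsV p" and d = "rhsU p * ?v + ?u * rhsV p"
      and X = "\<lambda>j. XR j p" and LX = "\<lambda>j. LL ?u1 ?v1 (\<lambda>i. XR i p) (k-1) j p"
      and LY = "\<lambda>j. LL (rhsU p) (rhsV p) (\<lambda>i. YH i p) (k-1) j p"
      and YH = "\<lambda>i. YH i p" and ps = "\<lambda>j. p (pc j)" and K = k and n = "k - 3",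
      OF X1 X2 Xr LXr LYr LL_small LL_small YH1 YHr cb dd]
  have kk: "k - 3 + 3 = k" "k - 3 + 2 = k - 1" "k - 3 + 1 = k - 2" using k by auto
  show ?thesis using conjunct1[OF M] unfolding kk LHS RHS using k by simp
qed


section \<open>Nontriviality\<close>

lemma inf_neg: "infinite {..<(0::real)}"
proof
  assume "finite {..<(0::real)}"
  moreover have "{-1<..<(0::real)} \<subseteq> {..<0}" by auto
  ultimately have "finite {-1<..<(0::real)}" by (rule finite_subset[rotated])
  then show False using infinite_Ioo[of "-1::real" 0] by simp
qed

lemma poly_contra:
  assumes N: "1 \<le> N" and H: "\<And>t::real. t < 0 \<Longrightarrow> t ^ N = c0 + (\<Sum>i\<in>{3..N+1}. t ^ (i - 2) * c i)"
  shows False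
proof -
  define P :: "real poly" where "P = monom 1 N - [:c0:] - (\<Sum>i\<in>{3..N+1}. monom (c i) (i - 2))"
  have roots: "{..<0} \<subseteq> {t. poly P t = 0}"
    using H by (auto simp: P_def poly_sum poly_monom mult.commute)
  have "P = 0"
  proof (rule ccontr)
    assume "P \<noteq> 0"
    then have "finite {t. poly P t = 0}" by (rule poly_roots_finite)
    then have "finite {..<(0::real)}" using roots finite_subset by blast
    then show False using inf_neg by simp
  qed
  moreover have "coeff P N = 1"
  proof -
    have "(\<Sum>i\<in>{3..N+1}. coeff (monom (c i) (i - 2)) N) = 0"
      by (intro sum.neutral) (auto simp: coeff_monom)
    moreover have "coeff [:c0:] N = 0" using N by (cases N) auto
    moreover have "coeff P N = coeff (monom 1 N) N - coeff [:c0:] N - (\<Sum>i\<in>{3..N+1}. coeff (monom (c i) (i - 2)) N)"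
      by (simp only: P_def coeff_diff coeff_sum)
    ultimately show ?thesis by (simp only: coeff_monom if_True) simp
  qed
  ultimately show False by simp
qed

definition trunc :: "nat \<Rightarrow> pt \<Rightarrow> pt" where
  "trunc n p = (\<lambda>c. case c of Cu i \<Rightarrow> if i < n then p c else 0 | Cv i \<Rightarrow> if i < n then p c else 0 | _ \<Rightarrow> p c)"

lemma trunc_upd_u: "n \<le> i \<Longrightarrow> trunc n (p(Cu i := a)) = trunc n p"
  by (rule ext) (auto simp: trunc_def split: coord.split)
lemma trunc_upd_v: "n \<le> i \<Longrightarrow> trunc n (p(Cv i := a)) = trunc n p"
  by (rule ext) (auto simp: trunc_def split: coord.split)

lemma deriv_const_fun: "(\<And>t. f t = (a::real)) \<Longrightarrow> deriv f x = 0"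
proof -
  assume "\<And>t. f t = a"
  then have "f = (\<lambda>_. a)" by auto
  then show ?thesis by simp
qed

lemma pd_high_u: "\<forall>q. g (trunc n q) = g q \<Longrightarrow> n \<le> i \<Longrightarrow> pd (Cu i) g p = 0"
  unfolding pd_def by (rule deriv_const_fun[of _ "g (trunc n p)"]) (metis trunc_upd_u)
lemma pd_high_v: "\<forall>q. g (trunc n q) = g q \<Longrightarrow> n \<le> i \<Longrightarrow> pd (Cv i) g p = 0"
  unfolding pd_def by (rule deriv_const_fun[of _ "g (trunc n p)"]) (metis trunc_upd_v)

lemma pd_upd_u:
  assumes "\<forall>q. g (trunc n q) = g q" "n \<le> i"
  shows "pd c g (p(Cu i := a)) = pd c g p"
proof (cases "c = Cu i")
  case True
  then show ?thesis using pd_high_u[OF assms] by simp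
next
  case False
  have "(\<lambda>t. g ((p(Cu i := a))(c := t))) = (\<lambda>t. g (p(c := t)))"
  proof
    fix t
    have "(p(Cu i := a))(c := t) = (p(c := t))(Cu i := a)" using False by (auto simp: fun_upd_twist)
    then show "g ((p(Cu i := a))(c := t)) = g (p(c := t))"
      by (metis assms trunc_upd_u)
  qed
  then show ?thesis using False by (simp add: pd_def)
qed

lemma pd_upd_v:
  assumes "\<forall>q. g (trunc n q) = g q" "n \<le> i"
  shows "pd c g (p(Cv i := a)) = pd c g p"
proof (cases "c = Cv i")
  case True
  then show ?thesis using pd_high_v[OF assms] by simp
next
  case False
  have "(\<lambda>t. g ((p(Cv i := a))(c := t))) = (\<lambda>t. g (p(c := t)))"
  proof
    fix t
    have "(p(Cv i := a))(c := t) = (p(c := t))(Cv i := a)" using False by (auto simp: fun_upd_twist)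
    then show "g ((p(Cv i := a))(c := t)) = g (p(c := t))"
      by (metis assms trunc_upd_v)
  qed
  then show ?thesis using False by (simp add: pd_def)
qed

lemma DxE_trunc:
  assumes "\<forall>q. g (trunc n q) = g q"
  shows "DxE m g p = pd Cx g p + (\<Sum>i<n. p (Cu (Suc i)) * pd (Cu i) g p + p (Cv (Suc i)) * pd (Cv i) g p)
     + (\<Sum>i\<in>{3..m+1}. Xk i p * pd (Cpsi i) g p)"
proof -
  have "(\<Sum>i. p (Cu (Suc i)) * pd (Cu i) g p + p (Cv (Suc i)) * pd (Cv i) g p)
      = (\<Sum>i<n. p (Cu (Suc i)) * pd (Cu i) g p + p (Cv (Suc i)) * pd (Cv i) g p)"
    by (rule suminf_finite) (auto simp: pd_high_u[OF assms] pd_high_v[OF assms])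
  then show ?thesis by (simp add: DxE_def Dx1_def)
qed

lemma Xk_upd_u: "Xk k (p(Cu (Suc j) := a)) = Xk k p"
  by (simp add: Xk_def sigma_def psi_pc)
lemma Xk_upd_v: "Xk k (p(Cv (Suc j) := a)) = Xk k p"
  by (simp add: Xk_def sigma_def psi_pc)

lemma Dom_upd: "p \<in> Dom \<Longrightarrow> p(Cu (Suc j) := a) \<in> Dom" "p \<in> Dom \<Longrightarrow> p(Cv (Suc j) := a) \<in> Dom"
  by (auto simp: Dom_def)

lemma lin_step_u:
  assumes tr: "\<forall>q. g (trunc n q) = g q" and jn: "n \<le> Suc j" and jlt: "j < n"
    and X: "\<forall>q\<in>Dom. Xk k q = DxE m g q" and pD: "p \<in> Dom"
  shows "pd (Cu j) g p = 0"
proof -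
  define p' where "p' = p(Cu (Suc j) := p (Cu (Suc j)) + 1)"
  have D': "p' \<in> Dom" using pD by (simp add: p'_def Dom_upd)
  have pdeq: "pd c g p' = pd c g p" for c unfolding p'_def by (rule pd_upd_u[OF tr jn])
  have Xeq: "Xk i p' = Xk i p" for i unfolding p'_def by (rule Xk_upd_u)
  have S: "(\<Sum>i<n. p' (Cu (Suc i)) * pd (Cu i) g p + p' (Cv (Suc i)) * pd (Cv i) g p)
      = (\<Sum>i<n. (p (Cu (Suc i)) * pd (Cu i) g p + p (Cv (Suc i)) * pd (Cv i) g p)
           + (if i = j then pd (Cu j) g p else 0))"
    by (intro sum.cong) (auto simp: p'_def algebra_simps)
  also have "\<dots> = (\<Sum>i<n. p (Cu (Suc i)) * pd (Cu i) g p + p (Cv (Suc i)) * pd (Cv i) g p) + pd (Cu j) g p"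
    using jlt by (simp add: sum.distrib)
  finally have "DxE m g p' = DxE m g p + pd (Cu j) g p"
    unfolding DxE_trunc[OF tr] pdeq Xeq by simp
  moreover have "Xk k p' = Xk k p" by (rule Xeq)
  ultimately show ?thesis using X D' pD by auto
qed

lemma lin_step_v:
  assumes tr: "\<forall>q. g (trunc n q) = g q" and jn: "n \<le> Suc j" and jlt: "j < n"
    and X: "\<forall>q\<in>Dom. Xk k q = DxE m g q" and pD: "p \<in> Dom"
  shows "pd (Cv j) g p = 0"
proof -
  define p' where "p' = p(Cv (Suc j) := p (Cv (Suc j)) + 1)"
  have D': "p' \<in> Dom" using pD by (simp add: p'_def Dom_upd)
  have pdeq: "pd c g p' = pd c g p" for c unfolding p'_def by (rule pd_upd_v[OF tr jn])
  have Xeq: "Xk i p' = Xk i p" for i unfolding p'_def by (rule Xk_upd_v)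
  have S: "(\<Sum>i<n. p' (Cu (Suc i)) * pd (Cu i) g p + p' (Cv (Suc i)) * pd (Cv i) g p)
      = (\<Sum>i<n. (p (Cu (Suc i)) * pd (Cu i) g p + p (Cv (Suc i)) * pd (Cv i) g p)
           + (if i = j then pd (Cv j) g p else 0))"
    by (intro sum.cong) (auto simp: p'_def algebra_simps)
  also have "\<dots> = (\<Sum>i<n. p (Cu (Suc i)) * pd (Cu i) g p + p (Cv (Suc i)) * pd (Cv i) g p) + pd (Cv j) g p"
    using jlt by (simp add: sum.distrib)
  finally have "DxE m g p' = DxE m g p + pd (Cv j) g p"
    unfolding DxE_trunc[OF tr] pdeq Xeq by simp
  moreover have "Xk k p' = Xk k p" by (rule Xeq)
  ultimately show ?thesis using X D' pD by auto
qed

definition DIFF :: "(pt \<Rightarrow> real) \<Rightarrow> bool" where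
  "DIFF g \<longleftrightarrow> (\<forall>c. \<forall>q\<in>Dom. (\<lambda>t. g (q(c:=t))) differentiable (at (q c)))"

lemma Dom_upd_gen: "c \<noteq> Cu 0 \<Longrightarrow> c \<noteq> Cv 0 \<Longrightarrow> p \<in> Dom \<Longrightarrow> p(c:=t) \<in> Dom"
  by (auto simp: Dom_def)

lemma DERIV_line:
  assumes d: "DIFF g" and z: "pd c g (p(c:=t)) = 0" and D: "p(c:=t) \<in> Dom"
  shows "((\<lambda>t. g (p(c:=t))) has_real_derivative 0) (at t)"
proof -
  let ?q = "p(c:=t)"
  have e: "(\<lambda>s. g (?q(c:=s))) = (\<lambda>s. g (p(c:=s)))" by simp
  have "(\<lambda>s. g (?q(c:=s))) differentiable (at (?q c))" using d D unfolding DIFF_def by blast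
  then have "(\<lambda>s. g (p(c:=s))) differentiable (at t)" by (simp add: e)
  then have "((\<lambda>s. g (p(c:=s))) has_real_derivative deriv (\<lambda>s. g (p(c:=s))) t) (at t)"
    by (simp add: DERIV_deriv_iff_real_differentiable)
  moreover have "deriv (\<lambda>s. g (p(c:=s))) t = 0" using z by (simp add: pd_def)
  ultimately show ?thesis by simp
qed

lemma const_line:
  assumes d: "DIFF g" and z: "\<forall>q\<in>Dom. pd c g q = 0" and line: "\<forall>t. p(c:=t) \<in> Dom"
  shows "g (p(c:=a)) = g p"
proof -
  have "\<forall>t. ((\<lambda>t. g (p(c:=t))) has_real_derivative 0) (at t)"
    using DERIV_line[OF d] z line by blast
  then have "(\<lambda>t. g (p(c:=t))) a = (\<lambda>t. g (p(c:=t))) (p c)" by (rule DERIV_isconst_all)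
  then show ?thesis by simp
qed

lemma const_u0:
  assumes d: "DIFF g" and z: "\<forall>q\<in>Dom. pd (Cu 0) g q = 0" and q0: "q (Cv 0) = 0"
    and t: "t < 0" and t': "t' < 0"
  shows "g (q(Cu 0 := t)) = g (q(Cu 0 := t'))"
proof -
  have "\<exists>C. \<forall>x\<in>{..<0::real}. g (q(Cu 0 := x)) = C"
  proof (rule has_field_derivative_zero_constant)
    fix x :: real assume "x \<in> {..<0}"
    then have D: "q(Cu 0 := x) \<in> Dom" using q0 by (auto simp: Dom_def)
    have "((\<lambda>t. g (q(Cu 0:=t))) has_real_derivative 0) (at x)"
      by (rule DERIV_line[OF d]) (use z D in auto)
    then show "((\<lambda>t. g (q(Cu 0:=t))) has_real_derivative 0) (at x within {..<0})"
      by (rule has_field_derivative_at_within)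
  qed simp
  then show ?thesis using t t' by auto
qed

lemma ev_Dom:
  assumes "q \<in> Dom"
  shows "eventually (\<lambda>t. q(c:=t) \<in> Dom) (nhds (q c))"
proof -
  have uv: "q (Cu 0) \<noteq> q (Cv 0)" using assms by (simp add: Dom_def)
  show ?thesis
  proof (cases "c = Cu 0")
    case True
    then show ?thesis using t1_space_nhds[OF uv] by (simp add: Dom_def)
  next
    case F1: False
    show ?thesis
    proof (cases "c = Cv 0")
      case True
      then show ?thesis using t1_space_nhds[OF uv[symmetric]] by (auto simp: Dom_def elim: eventually_mono)
    next
      case False
      then show ?thesis using F1 assms by (simp add: Dom_upd_gen)
    qed
  qed
qed

lemma reduce:
  assumes j1: "1 \<le> j" and tr: "\<forall>q. g (trunc (Suc j) q) = g q" and d: "DIFF g"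
    and X: "\<forall>q\<in>Dom. Xk k q = DxE m g q"
  shows "\<exists>g'. (\<forall>q. g' (trunc j q) = g' q) \<and> DIFF g' \<and> (\<forall>q\<in>Dom. Xk k q = DxE m g' q)"
proof -
  have cu: "Cu j \<noteq> Cu 0" "Cu j \<noteq> Cv 0" and cv: "Cv j \<noteq> Cu 0" "Cv j \<noteq> Cv 0" using j1 by auto
  have zu: "\<forall>q\<in>Dom. pd (Cu j) g q = 0" using lin_step_u[OF tr _ _ X] by auto
  have zv: "\<forall>q\<in>Dom. pd (Cv j) g q = 0" using lin_step_v[OF tr _ _ X] by auto
  have inv_u: "g (q(Cu j := a)) = g q" if "q \<in> Dom" for q a
    by (rule const_line[OF d zu]) (use that cu in \<open>auto intro: Dom_upd_gen\<close>)
  have inv_v: "g (q(Cv j := a)) = g q" if "q \<in> Dom" for q a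
    by (rule const_line[OF d zv]) (use that cv in \<open>auto intro: Dom_upd_gen\<close>)
  define g' where "g' = (\<lambda>q. g (q(Cu j := 0, Cv j := 0)))"
  have g'eq: "g' q = g q" if "q \<in> Dom" for q
  proof -
    have "q(Cu j := 0) \<in> Dom" using that cu by (intro Dom_upd_gen) auto
    then show ?thesis unfolding g'_def using inv_v inv_u that by simp
  qed
  have T: "\<forall>q. g' (trunc j q) = g' q"
  proof
    fix q
    have "(trunc j q)(Cu j := 0, Cv j := 0) = trunc (Suc j) (q(Cu j := 0, Cv j := 0))"
      by (rule ext) (auto simp: trunc_def split: coord.split)
    then show "g' (trunc j q) = g' q" unfolding g'_def using tr by simp
  qed
  have D: "DIFF g'"
    unfolding DIFF_def
  proof (intro allI ballI)
    fix c q assume qD: "q \<in> Dom"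
    show "(\<lambda>t. g' (q(c:=t))) differentiable (at (q c))"
    proof (cases "c = Cu j \<or> c = Cv j")
      case True
      then have "(\<lambda>t. g' (q(c:=t))) = (\<lambda>t. g' q)" by (auto simp: g'_def fun_upd_twist)
      then show ?thesis by simp
    next
      case False
      let ?q = "q(Cu j := 0, Cv j := 0)"
      have qD': "?q \<in> Dom" using qD cu cv by (intro Dom_upd_gen) (auto intro: Dom_upd_gen)
      have e: "(\<lambda>t. g' (q(c:=t))) = (\<lambda>t. g (?q(c:=t)))" using False by (auto simp: g'_def fun_upd_twist)
      have "(\<lambda>t. g (?q(c:=t))) differentiable (at (?q c))" using d qD' unfolding DIFF_def by blast
      then show ?thesis using False e by simp
    qed
  qed
  have pdeq: "pd c g' q = pd c g q" if qD: "q \<in> Dom" for c q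
  proof (cases "c = Cu j \<or> c = Cv j")
    case True
    then have "(\<lambda>t. g' (q(c:=t))) = (\<lambda>t. g' q)" by (auto simp: g'_def fun_upd_twist)
    then have "pd c g' q = 0" by (simp add: pd_def)
    then show ?thesis using True zu zv qD by auto
  next
    case False
    have "eventually (\<lambda>t. g' (q(c:=t)) = g (q(c:=t))) (nhds (q c))"
      using ev_Dom[OF qD, of c] by (auto elim: eventually_mono simp: g'eq)
    then show ?thesis unfolding pd_def by (rule deriv_cong_ev) simp
  qed
  have "\<forall>q\<in>Dom. Xk k q = DxE m g' q"
    using X by (simp add: DxE_def Dx1_def pdeq)
  then show ?thesis using T D by blast
qed

lemma sigma_pt: "sigma n ((\<lambda>_. 0)(Cu 0 := t)) = t ^ n"
  by (induction n) (simp_all add: sigma_Suc)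

lemma Xk_pt: "Xk i ((\<lambda>_. 0)(Cu 0 := t)) = t ^ (i - 2)"
  by (simp add: Xk_def sigma_pt psi_pc)

lemma base:
  assumes k: "3 \<le> k" and tr: "\<forall>q. g (trunc 1 q) = g q" and d: "DIFF g"
    and X: "\<forall>q\<in>Dom. Xk k q = DxE (Bidx k) g q"
  shows False
proof -
  have zu: "\<forall>q\<in>Dom. pd (Cu 0) g q = 0" using lin_step_u[OF tr _ _ X] by auto
  have zv: "\<forall>q\<in>Dom. pd (Cv 0) g q = 0" using lin_step_v[OF tr _ _ X] by auto
  define pt where "pt t = (\<lambda>_. 0 :: real)(Cu 0 := t)" for t
  have ptD: "pt t \<in> Dom" if "t < 0" for t using that by (simp add: pt_def Dom_def)
  have pdc: "pd c g (pt t) = pd c g (pt (-1))" if "t < 0" "c \<noteq> Cu 0" "c \<noteq> Cv 0" for c t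
  proof -
    have "g ((pt t)(c := s)) = g ((pt (-1))(c := s))" for s
    proof -
      have "g (((pt (-1))(c := s))(Cu 0 := t)) = g (((pt (-1))(c := s))(Cu 0 := -1))"
        by (rule const_u0[OF d zu]) (use that in \<open>auto simp: pt_def\<close>)
      moreover have "((pt (-1))(c := s))(Cu 0 := t) = (pt t)(c := s)"
        using that by (auto simp: pt_def fun_upd_twist)
      moreover have "((pt (-1))(c := s))(Cu 0 := -1) = (pt (-1))(c := s)"
        using that by (auto simp: pt_def fun_upd_twist)
      ultimately show ?thesis by simp
    qed
    moreover have "pt t c = pt (-1) c" using that by (simp add: pt_def)
    ultimately show ?thesis by (simp add: pd_def)
  qed
  define N where "N = k - 2"
  have N1: "1 \<le> N" using k by (simp add: N_def)
  have BN: "Bidx k + 1 = N + 1" using Bidx_eq[OF k] k by (simp add: N_def)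
  show False
  proof (rule poly_contra[OF N1])
    fix t :: real assume t: "t < 0"
    have "t ^ N = Xk k (pt t)" by (simp add: Xk_pt pt_def N_def)
    also have "\<dots> = DxE (Bidx k) g (pt t)" using X ptD[OF t] by blast
    also have "\<dots> = pd Cx g (pt t) + (\<Sum>i\<in>{3..N+1}. Xk i (pt t) * pd (Cpsi i) g (pt t))"
      unfolding DxE_trunc[OF tr] BN using zu zv ptD[OF t] by simp
    also have "\<dots> = pd Cx g (pt (-1)) + (\<Sum>i\<in>{3..N+1}. t ^ (i - 2) * pd (Cpsi i) g (pt (-1)))"
      using pdc[OF t] by (simp add: Xk_pt pt_def)
    finally show "t ^ N = pd Cx g (pt (-1)) + (\<Sum>i\<in>{3..N+1}. t ^ (i - 2) * pd (Cpsi i) g (pt (-1)))" .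
  qed
qed

lemma nontriv_ind:
  assumes k: "3 \<le> k"
  shows "1 \<le> n \<Longrightarrow> (\<forall>q. g (trunc n q) = g q) \<Longrightarrow> DIFF g \<Longrightarrow> (\<forall>q\<in>Dom. Xk k q = DxE (Bidx k) g q) \<Longrightarrow> False"
proof (induction n arbitrary: g)
  case 0 then show ?case by simp
next
  case (Suc n)
  show ?case
  proof (cases "n = 0")
    case True
    then have "\<forall>q. g (trunc 1 q) = g q" using Suc.prems(2) by simp
    then show ?thesis using base[OF k] Suc.prems(3,4) by blast
  next
    case False
    then obtain g' where "\<forall>q. g' (trunc n q) = g' q" "DIFF g'" "\<forall>q\<in>Dom. Xk k q = DxE (Bidx k) g' q"
      using reduce[of n g k "Bidx k"] Suc.prems by auto
    then show ?thesis using Suc.IH[of g'] False by simp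
  qed
qed

lemma nontriv:
  assumes k: "3 \<le> k" and sm: "smoothE (Bidx k) g" and X: "\<forall>p\<in>Dom. Xk k p = DxE (Bidx k) g p"
  shows False
proof -
  obtain S where S: "finite S" "\<forall>p q. (\<forall>c\<in>S. p c = q c) \<longrightarrow> g p = g q"
    using sm unfolding smoothE_def by blast
  have d: "DIFF g" using sm unfolding smoothE_def DIFF_def
    by (metis iter_pd.simps(1))
  have "finite (Cu -` S \<union> Cv -` S)" using S(1) by (auto intro: finite_vimageI inj_onI)
  then obtain n0 where n0: "Cu -` S \<union> Cv -` S \<subseteq> {..<n0}" using finite_nat_bounded by blast
  have tr: "\<forall>q. g (trunc (Suc n0) q) = g q"
  proof
    fix q
    have "\<forall>c\<in>S. trunc (Suc n0) q c = q c"
    proof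
      fix c assume c: "c \<in> S"
      show "trunc (Suc n0) q c = q c"
        using n0 c by (cases c) (auto simp: trunc_def)
    qed
    then show "g (trunc (Suc n0) q) = g q" using S(2) by blast
  qed
  show False by (rule nontriv_ind[OF k _ tr d X]) simp
qed

theorem mainTheorem7:
  fixes k :: nat
  assumes "k \<ge> 3"
  shows "(\<forall>p\<in>Dom. DyE (Bidx k) (Xk k) p = DxE (Bidx k) (Yk k) p) \<and>
         \<not> (\<exists>g. smoothE (Bidx k) g \<and>
               (\<forall>p\<in>Dom. Xk k p = DxE (Bidx k) g p \<and> Yk k p = DyE (Bidx k) g p))"
  using part1[OF assms] nontriv[OF assms] by blast

end
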